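(* Under the setting of the context (with $\boldsymbol{Z}_a=[\boldsymbol{Z}_r\ \boldsymbol{Z}_u]$ of full column rank, $N_u\le N_r$, and arbitrary $\boldsymbol{w}_{\mathrm{init}}$, $\boldsymbol{y}_r$, $\boldsymbol{y}_u$), let $\boldsymbol{Z}_{r,\mathrm{sub}}\in\mathbb{R}^{D\times N_u}$ consist of $N_u$ columns of $\boldsymbol{Z}_r$ and $\boldsymbol{y}_{r,\mathrm{sub}}\in\mathbb{R}^{N_u}$ the corresponding entries of $\boldsymbol{y}_r$. Fix $c\in(0,1)$, set $\tilde{\boldsymbol{Z}}_u=(1-c)\boldsymbol{Z}_{r,\mathrm{sub}}+c\boldsymbol{Z}_u$, $\tilde{\boldsymbol{Z}}_a=[\boldsymbol{Z}_r\ \tilde{\boldsymbol{Z}}_u]$, $\tilde{\boldsymbol{y}}_a=[\boldsymbol{y}_r;\boldsymbol{y}_{r,\mathrm{sub}}]$, and define the unlearned model $\boldsymbol{w}_u=\boldsymbol{w}_p+\tilde{\boldsymbol{Z}}_a(\tilde{\boldsymbol{Z}}_a^\top\tilde{\boldsymbol{Z}}_a)^{-1}(\tilde{\boldsymbol{y}}_a-\tilde{\boldsymbol{Z}}_a^\top\boldsymbol{w}_p)$. Then $\tilde{\boldsymbol{Z}}_a^\top\tilde{\boldsymbol{Z}}_a$ is invertible and $$\boldsymbol{w}_r-\boldsymbol{w}_u=(\boldsymbol{I}_D-\boldsymbol{\Pi}_r)\boldsymbol{Z}_u\boldsymbol{M}\Big(\boldsymbol{K}_{ur}\boldsymbol{K}_{rr}^{-1}(\boldsymbol{y}_r-\boldsymbol{Z}_r^\top\boldsymbol{w}_{\mathrm{init}})+\boldsymbol{Z}_u^\top\boldsymbol{w}_{\mathrm{init}}-\boldsymbol{y}_{r,\mathrm{sub}}\Big);$$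 in particular $\boldsymbol{w}_r-\boldsymbol{w}_u$ does not depend on $c$.
   Context: Setting (over-parameterized linear model trained to interpolation / minimum-distance solutions). Given $\boldsymbol{Z}_r\in\mathbb{R}^{D\times N_r}$ (features of remaining data), $\boldsymbol{Z}_u\in\mathbb{R}^{D\times N_u}$ (features of forgetting data), with $\boldsymbol{Z}_a=[\boldsymbol{Z}_r\ \boldsymbol{Z}_u]$ of full column rank. Write $\boldsymbol{y}_a=[\boldsymbol{y}_r;\boldsymbol{y}_u]\in\mathbb{R}^{N_r+N_u}$ (original labels), $\boldsymbol{w}_{\mathrm{init}}\in\mathbb{R}^D$. Define $\boldsymbol{w}_p=\boldsymbol{w}_{\mathrm{init}}+\boldsymbol{Z}_a(\boldsymbol{Z}_a^\top\boldsymbol{Z}_a)^{-1}(\boldsymbol{y}_a-\boldsymbol{Z}_a^\top\boldsymbol{w}_{\mathrm{init}})$ (pre-trained model), $\boldsymbol{w}_r=\boldsymbol{w}_{\mathrm{init}}+\boldsymbol{Z}_r(\boldsymbol{Z}_r^\top\boldsymbol{Z}_r)^{-1}(\boldsymbol{y}_r-\boldsymbol{Z}_r^\top\boldsymbol{w}_{\mathrm{init}})$ (retrained model). Let $\boldsymbol{K}_{rr}=\boldsymbol{Z}_r^\top\boldsymbol{Z}_r$, $\boldsymbol{K}_{ru}=\boldsymbol{Z}_r^\top\boldsymbol{Z}_u$, $\boldsymbol{K}_{ur}=\boldsymbol{Z}_u^\top\boldsymbol{Z}_r$, $\boldsymbol{K}_{uu}=\boldsymbol{Z}_u^\top\boldsymbol{Z}_u$,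 $\boldsymbol{M}=(\boldsymbol{K}_{uu}-\boldsymbol{K}_{ur}\boldsymbol{K}_{rr}^{-1}\boldsymbol{K}_{ru})^{-1}$ (inverse of the Schur complement), and $\boldsymbol{\Pi}_r=\boldsymbol{Z}_r(\boldsymbol{Z}_r^\top\boldsymbol{Z}_r)^{-1}\boldsymbol{Z}_r^\top$. $\boldsymbol{I}_D$ is the $D\times D$ identity. *)

theory Defs
  imports "HOL-Analysis.Analysis"
begin

definition hcat :: "real^'p^'d \<Rightarrow> real^'q^'d \<Rightarrow> real^('p + 'q)^'d" where
  "hcat A B = (\<chi> i j. case j of Inl a \<Rightarrow> A $ i $ a | Inr b \<Rightarrow> B $ i $ b)"

definition vcat :: "real^'p \<Rightarrow> real^'q \<Rightarrow> real^('p + 'q)" where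
  "vcat x y = (\<chi> j. case j of Inl a \<Rightarrow> x $ a | Inr b \<Rightarrow> y $ b)"

definition min_dist_sol :: "real^'d \<Rightarrow> real^'n^'d \<Rightarrow> real^'n \<Rightarrow> real^'d" where
  "min_dist_sol w0 Z y = w0 + Z *v (matrix_inv (transpose Z ** Z) *v (y - transpose Z *v w0))"

end

theory Submission
  imports Defs
begin
declare transpose_matrix_vector [simp del]

lemma minv:
  fixes A :: "real^'n^'n"
  assumes "invertible A"
  shows "A ** matrix_inv A = mat 1" "matrix_inv A ** A = mat 1"
  using someI_ex[OF assms[unfolded invertible_def]] unfolding matrix_inv_def by auto

lemma minv_v:
  fixes A :: "real^'n^'n"
  assumes "invertible A"
  shows "A *v (matrix_inv A *v x) = x" "matrix_inv A *v (A *v x) = x"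
  by (simp_all add: matrix_vector_mul_assoc minv[OF assms])

lemma inj_inv:
  fixes A :: "real^'n^'n"
  assumes "\<And>x. A *v x = 0 \<Longrightarrow> x = 0"
  shows "invertible A"
proof -
  have "inj ((*v) A)"
    unfolding inj_def using assms by (metis matrix_vector_mult_diff_distrib right_minus_eq)
  then show ?thesis
    using matrix_left_invertible_injective invertible_left_inverse by blast
qed

lemma mv_inner: "(Z *v v) \<bullet> y = v \<bullet> (transpose Z *v y)" for Z :: "real^'n^'m"
  by (metis dot_lmul_matrix vector_transpose_matrix)

lemma gram_zero:
  fixes Z :: "real^'n^'m"
  assumes "transpose Z *v (Z *v v) = 0"
  shows "Z *v v = 0"
  using mv_inner[of Z v "Z *v v"] assms by simp

lemma gram_inv:
  fixes Z :: "real^'n^'m"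
  assumes "\<And>v. Z *v v = 0 \<Longrightarrow> v = 0"
  shows "invertible (transpose Z ** Z)"
  by (rule inj_inv) (metis assms gram_zero matrix_vector_mul_assoc)

lemma min_dist_fit:
  fixes Z :: "real^'n^'m"
  assumes "invertible (transpose Z ** Z)"
  shows "transpose Z *v min_dist_sol w0 Z y = y"
proof -
  have e: "transpose Z *v (Z *v v) = (transpose Z ** Z) *v v" for v by (rule matrix_vector_mul_assoc)
  show ?thesis unfolding min_dist_sol_def
    by (simp add: matrix_vector_right_distrib e minv_v[OF assms])
qed

lemma hcat_mv: "hcat A B *v x = A *v (\<chi> a. x $ Inl a) + B *v (\<chi> b. x $ Inr b)"
proof -
  have "(\<Sum>j\<in>UNIV. f j) = (\<Sum>a\<in>UNIV. f (Inl a)) + (\<Sum>b\<in>UNIV. f (Inr b))" for f :: "(_::finite) + (_::finite) \<Rightarrow> real"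
    by (subst UNIV_Plus_UNIV[symmetric], subst sum.Plus) (auto simp: o_def)
  from this[of "\<lambda>j. (case j of Inl x \<Rightarrow> A $ i $ x | Inr x \<Rightarrow> B $ i $ x) * x $ j" for i]
  show ?thesis
    by (simp add: vec_eq_iff matrix_vector_mult_def hcat_def)
qed

lemma hcat_mv_vcat: "hcat A B *v vcat a b = A *v a + B *v b"
  by (simp add: hcat_mv vcat_def)

lemma hcat_tmv: "transpose (hcat A B) *v w = vcat (transpose A *v w) (transpose B *v w)"
  by (simp add: vec_eq_iff matrix_vector_mult_def hcat_def vcat_def transpose_def split: sum.split)

lemma vcat_eq: "vcat a b = vcat a' b' \<longleftrightarrow> a = a' \<and> b = b'"
proof
  assume h: "vcat a b = vcat a' b'"
  have "a $ i = a' $ i" for i using h[unfolded vcat_def vec_eq_iff, rule_format, of "Inl i"] by simp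
  moreover have "b $ i = b' $ i" for i using h[unfolded vcat_def vec_eq_iff, rule_format, of "Inr i"] by simp
  ultimately show "a = a' \<and> b = b'" by (simp add: vec_eq_iff)
qed simp

lemma vcat_zero: "vcat a b = 0 \<longleftrightarrow> a = 0 \<and> b = 0"
proof -
  have "(0::real^('a+'b)) = vcat 0 0" by (simp add: vcat_def vec_eq_iff split: sum.split)
  then show ?thesis by (metis vcat_eq)
qed

lemma vcat_split: "x = vcat (\<chi> a. x $ Inl a) (\<chi> b. x $ Inr b)"
  by (simp add: vcat_def vec_eq_iff split: sum.split)

lemma mv_neg: "A *v (- x) = - (A *v x)" for A :: "real^'n^'m"
  by (simp add: vec_eq_iff matrix_vector_mult_def sum_negf)

theorem mainTheorem4:
  fixes Zr :: "real^'nr^'d" and Zu :: "real^'nu^'d"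
    and yr :: "real^'nr" and yu :: "real^'nu" and winit :: "real^'d"
    and s :: "'nu \<Rightarrow> 'nr" and c :: real
  assumes full_rank: "rank (hcat Zr Zu) = CARD('nr + 'nu)"
    and size_le: "CARD('nu) \<le> CARD('nr)"
    and sub_inj: "inj s"
    and c_pos: "0 < c" and c_lt1: "c < 1"
  shows
    "let Za = hcat Zr Zu; ya = vcat yr yu;
         wp = min_dist_sol winit Za ya;
         wr = min_dist_sol winit Zr yr;
         Zrsub = (\<chi> i j. Zr $ i $ s j) :: real^'nu^'d;
         yrsub = (\<chi> j. yr $ s j) :: real^'nu;
         Zut = (1 - c) *\<^sub>R Zrsub + c *\<^sub>R Zu;
         Zat = hcat Zr Zut;
         yat = vcat yr yrsub;
         wu = wp + Zat *v (matrix_inv (transpose Zat ** Zat) *v (yat - transpose Zat *v wp));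
         Krr = transpose Zr ** Zr;
         Kru = transpose Zr ** Zu;
         Kur = transpose Zu ** Zr;
         Kuu = transpose Zu ** Zu;
         M = matrix_inv (Kuu - Kur ** matrix_inv Krr ** Kru);
         Pir = Zr ** matrix_inv Krr ** transpose Zr
     in invertible (transpose Zat ** Zat) \<and>
        wr - wu = (mat 1 - Pir) *v (Zu *v (M *v
           (Kur *v (matrix_inv Krr *v (yr - transpose Zr *v winit))
            + transpose Zu *v winit - yrsub)))"
proof -
  define Za where "Za = hcat Zr Zu"
  define ya where "ya = vcat yr yu"
  define wp where "wp = min_dist_sol winit Za ya"
  define wr where "wr = min_dist_sol winit Zr yr"
  define Zrsub where "Zrsub = ((\<chi> i j. Zr $ i $ s j) :: real^'nu^'d)"
  define yrsub where "yrsub = ((\<chi> j. yr $ s j) :: real^'nu)"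
  define Zut where "Zut = (1 - c) *\<^sub>R Zrsub + c *\<^sub>R Zu"
  define Zat where "Zat = hcat Zr Zut"
  define yat where "yat = vcat yr yrsub"
  define wu where "wu = wp + Zat *v (matrix_inv (transpose Zat ** Zat) *v (yat - transpose Zat *v wp))"
  define Krr where "Krr = transpose Zr ** Zr"
  define Kru where "Kru = transpose Zr ** Zu"
  define Kur where "Kur = transpose Zu ** Zr"
  define Kuu where "Kuu = transpose Zu ** Zu"
  define S where "S = Kuu - Kur ** matrix_inv Krr ** Kru"
  define M where "M = matrix_inv S"
  define Pir where "Pir = Zr ** matrix_inv Krr ** transpose Zr"
  define Sel where "Sel = ((\<chi> k j. if s j = k then 1 else 0) :: real^'nu^'nr)"
  have Zrsub_eq: "Zrsub = Zr ** Sel"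
    by (simp add: Zrsub_def Sel_def matrix_matrix_mult_def vec_eq_iff if_distrib cong: if_cong)
  have yrsub_eq: "yrsub = transpose Sel *v yr"
    by (simp add: yrsub_def Sel_def matrix_vector_mult_def transpose_def vec_eq_iff mult_delta_left)
  have injZa: "x = 0" if "Za *v x = 0" for x
    using full_rank that unfolding Za_def full_rank_injective inj_def
    by (metis matrix_vector_mult_0_right)
  have injZr: "a = 0" if "Zr *v a = 0" for a
  proof -
    have "Za *v vcat a 0 = 0" using that by (simp add: Za_def hcat_mv_vcat)
    then show ?thesis using injZa vcat_zero by blast
  qed
  have Zut_mv: "Zut *v b = Zr *v ((1 - c) *\<^sub>R (Sel *v b)) + Zu *v (c *\<^sub>R b)" for b
    by (simp add: Zut_def Zrsub_eq matrix_vector_mult_add_rdistrib matrix_vector_mult_scaleR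
        scaleR_matrix_vector_assoc[symmetric] matrix_vector_mul_assoc[symmetric])
  have injZat: "x = 0" if "Zat *v x = 0" for x
  proof -
    define a where "a = (\<chi> i. x $ Inl i)"
    define b where "b = (\<chi> i. x $ Inr i)"
    have xab: "x = vcat a b" using vcat_split[of x] a_def b_def by simp
    have "Zat *v x = Zr *v a + Zut *v b" unfolding xab Zat_def by (rule hcat_mv_vcat)
    then have "Za *v vcat (a + (1 - c) *\<^sub>R (Sel *v b)) (c *\<^sub>R b) = 0"
      using that unfolding Za_def hcat_mv_vcat Zut_mv
      by (simp add: matrix_vector_right_distrib algebra_simps)
    then have "a + (1 - c) *\<^sub>R (Sel *v b) = 0" "c *\<^sub>R b = 0" using injZa vcat_zero by blast+
    then have "a = 0" "b = 0" using c_pos by auto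
    then show ?thesis using vcat_split[of x] vcat_zero a_def b_def by metis
  qed
  have invKrr: "invertible Krr" unfolding Krr_def by (rule gram_inv) (rule injZr)
  have invGa: "invertible (transpose Za ** Za)" by (rule gram_inv) (rule injZa)
  have invGt: "invertible (transpose Zat ** Zat)" by (rule gram_inv) (rule injZat)
  have wu_eq: "wu = min_dist_sol wp Zat yat" unfolding wu_def min_dist_sol_def ..
  have fit_u: "transpose Zat *v wu = yat" unfolding wu_eq by (rule min_dist_fit[OF invGt])
  have fit_r: "transpose Zr *v wr = yr" unfolding wr_def by (rule min_dist_fit) (simp add: invKrr[unfolded Krr_def])
  have fu: "transpose Zr *v wu = yr" "transpose Zut *v wu = yrsub"
    using fit_u unfolding Zat_def yat_def hcat_tmv vcat_eq by auto
  have "transpose Zut *v wu = (1 - c) *\<^sub>R yrsub + c *\<^sub>R (transpose Zu *v wu)"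
  proof -
    have tadd: "transpose (A + B) = transpose A + transpose B" for A B :: "real^'nu^'d"
      by (simp add: transpose_def vec_eq_iff)
    show ?thesis
      by (simp add: Zut_def Zrsub_eq tadd transpose_scalar matrix_transpose_mul
         matrix_vector_mult_add_rdistrib scaleR_matrix_vector_assoc[symmetric]
         matrix_vector_mul_assoc[symmetric] fu(1) yrsub_eq)
  qed
  then have uu: "transpose Zu *v wu = yrsub" using fu(2) c_pos
    by (metis (no_types, lifting) add_diff_cancel_left' add_left_cancel diff_add_cancel
        less_irrefl scaleR_cancel_left scaleR_collapse)
  define hr where "hr = matrix_inv Krr *v (yr - transpose Zr *v winit)"
  have wr_eq: "wr = winit + Zr *v hr" unfolding wr_def min_dist_sol_def hr_def Krr_def ..
  define hp where "hp = matrix_inv (transpose Za ** Za) *v (ya - transpose Za *v winit)"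
  have wp_eq: "wp = winit + Za *v hp" unfolding wp_def min_dist_sol_def hp_def ..
  define gu where "gu = matrix_inv (transpose Zat ** Zat) *v (yat - transpose Zat *v wp)"
  have wu_eq2: "wu = wp + Zat *v gu" unfolding wu_def gu_def ..
  define hp1 where "hp1 = (\<chi> i. hp $ Inl i)"
  define hp2 where "hp2 = (\<chi> i. hp $ Inr i)"
  define gu1 where "gu1 = (\<chi> i. gu $ Inl i)"
  define gu2 where "gu2 = (\<chi> i. gu $ Inr i)"
  have e1: "Za *v hp = Zr *v hp1 + Zu *v hp2" unfolding Za_def hp1_def hp2_def by (rule hcat_mv)
  have e2: "Zat *v gu = Zr *v gu1 + Zut *v gu2" unfolding Zat_def gu1_def gu2_def by (rule hcat_mv)
  define a where "a = hr - hp1 - gu1 - (1 - c) *\<^sub>R (Sel *v gu2)"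
  define b where "b = - hp2 - c *\<^sub>R gu2"
  have d_eq: "wr - wu = Zr *v a + Zu *v b"
    unfolding wr_eq wu_eq2 wp_eq e1 e2 Zut_mv a_def b_def
    by (simp add: algebra_simps mv_neg)
  have "transpose Zr *v (wr - wu) = 0"
    by (simp add: matrix_vector_mult_diff_distrib fit_r fu(1))
  then have h1: "Krr *v a + Kru *v b = 0"
    unfolding d_eq Krr_def Kru_def by (simp add: matrix_vector_right_distrib matrix_vector_mul_assoc[symmetric] matrix_vector_mult_diff_distrib)
  have aeq: "a = - (matrix_inv Krr *v (Kru *v b))"
  proof -
    have "matrix_inv Krr *v (Krr *v a + Kru *v b) = 0" using h1 by simp
    then have "a + matrix_inv Krr *v (Kru *v b) = 0"
      by (simp add: matrix_vector_right_distrib minv_v[OF invKrr])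
    then show ?thesis by (simp add: eq_neg_iff_add_eq_0)
  qed
  define q where "q = Kur *v (matrix_inv Krr *v (yr - transpose Zr *v winit))
            + transpose Zu *v winit - yrsub"
  have "transpose Zu *v (wr - wu) = q"
    unfolding q_def matrix_vector_mult_diff_distrib uu wr_eq Kur_def
    by (simp add: matrix_vector_right_distrib matrix_vector_mult_diff_distrib matrix_vector_mul_assoc[symmetric] hr_def)
  moreover have "transpose Zu *v (wr - wu) = S *v b"
    unfolding d_eq aeq S_def Kur_def Kuu_def
    by (simp add: matrix_vector_right_distrib matrix_vector_mul_assoc[symmetric] matrix_vector_mult_diff_rdistrib matrix_vector_mult_diff_distrib
        mv_neg)
  ultimately have Sb: "S *v b = q" by simp
  have invS: "invertible S"
  proof (rule inj_inv)
    fix x assume Sx: "S *v x = 0"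
    define a' where "a' = - (matrix_inv Krr *v (Kru *v x))"
    define e where "e = Zr *v a' + Zu *v x"
    have eZa: "e = Za *v vcat a' x" unfolding e_def Za_def hcat_mv_vcat ..
    have "transpose Zr *v e = Krr *v a' + Kru *v x"
      unfolding e_def Krr_def Kru_def by (simp add: matrix_vector_right_distrib matrix_vector_mul_assoc[symmetric] matrix_vector_mult_diff_distrib mv_neg)
    also have "\<dots> = 0" unfolding a'_def by (simp add: mv_neg minv_v[OF invKrr])
    finally have r1: "transpose Zr *v e = 0" .
    have "transpose Zu *v e = S *v x"
      unfolding e_def a'_def S_def Kur_def Kuu_def
      by (simp add: matrix_vector_right_distrib matrix_vector_mul_assoc[symmetric] matrix_vector_mult_diff_rdistrib matrix_vector_mult_diff_distrib mv_neg)
    then have r2: "transpose Zu *v e = 0" using Sx by simp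
    have "transpose Za *v e = 0"
      unfolding Za_def hcat_tmv r1 r2 vcat_zero by simp
    then have "Za *v vcat a' x = 0" using gram_zero eZa by metis
    then have "vcat a' x = 0" by (rule injZa)
    then show "x = 0" using vcat_zero by blast
  qed
  have beq: "b = M *v q" unfolding M_def Sb[symmetric] by (simp add: minv_v[OF invS])
  have final: "wr - wu = (mat 1 - Pir) *v (Zu *v (M *v q))"
    unfolding beq[symmetric] d_eq aeq Pir_def Kru_def
    by (simp add: matrix_vector_mult_diff_rdistrib matrix_vector_mul_assoc[symmetric] mv_neg)
  have "invertible (transpose Zat ** Zat) \<and> wr - wu = (mat 1 - Pir) *v (Zu *v (M *v q))"
    using invGt final by simp
  then show ?thesis
    by (simp only: Let_def Za_def ya_def wp_def wr_def Zrsub_def yrsub_def Zut_def Zat_def yat_def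
        wu_def Krr_def Kru_def Kur_def Kuu_def M_def S_def Pir_def q_def)
qed
end
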